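(* Let $k\ge r\ge3$ and $p,t\ge 0$ be integers and let $\pi\in\mathbb{C}_{<}(k,r|p,t)$ with $\pi^{(2)}_p\ge 2t+6$. Then every part of $\pi$ equal to $2t+2$ or to $2t+4$ has mark at most $1$ in $GG(\pi)$.
   Context: A partition $\pi=(\pi_1,\dots,\pi_\ell)$ is a finite non-increasing sequence of positive integers; "$a$ occurs in $\pi$" means $a=\pi_i$ for some $i$. Göllnitz–Gordon marking: $GG(\pi)$ assigns a positive integer (mark) to each part, processing the parts from smallest to largest; $\pi_i$ receives the smallest positive integer different from the marks of all parts $\pi_g$ with $g>i$ and $\pi_i-\pi_g\le 2$, where $\pi_i-\pi_g<2$ is required when $\pi_i$ is odd. An "$r$-marked part $a$" is a part equal to $a$ with mark $r$. $N_i(\pi)$ is the number of parts with mark $i$; $\pi^{(i)}_1\ge\dots\ge\pi^{(i)}_{N_i(\pi)}$ are the parts with mark $i$, with $\pi^{(i)}_0=+\infty$, $\pi^{(i)}_{N_i(\pi)+1}=-\infty$. $\mathbb{C}(k,r)$: partitions with (i) no odd part repeated; (ii) $\pi_i\ge\pi_{i+k-1}+2$ for $1\le i\le\ell-k+1$, strict if $\pi_i$ even; (iii) at most $r-1$ parts $\le 2$. Starting types: for $\pi\in\mathbb{C}(k,r)$ with $N_2=N_2(\pi)\ge1$, let $l$ be the largest integer in $\{0,\dots,N_2\}$ such that no odd part of $\pi$ is $\ge\pi^{(2)}_l$; for $l<i\le N_2$, $\pi^{(2)}_i$ has type $s_{-1}$. For $b=1,\dots,l$ in increasing order, type and auxiliary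 $\sigma_b$: for $b=1$: Case 1: 1-marked part $\pi^{(2)}_1-1$ exists and $\pi^{(2)}_1+2$ does not occur: type $s_0$, $\sigma_1=\pi^{(2)}_1-1$; Case 2: 1-marked $\pi^{(2)}_1-2$ exists and $\pi^{(2)}_1+2$ does not occur: type $s_1$, $\sigma_1=\pi^{(2)}_1-2$; Case 3: 1-marked $\pi^{(2)}_1+2$ exists: type $s_2$, $\sigma_1=\pi^{(2)}_1+2$; Case 4: 1-marked $\pi^{(2)}_1$ exists: type $s_3$, $\sigma_1=\pi^{(2)}_1$. For $2\le b\le l$: Case 1: 1-marked $\pi^{(2)}_b-1$ exists and, if a 1-marked $\pi^{(2)}_b+2$ exists, $\sigma_{b-1}=\pi^{(2)}_b+2$: type $s_0$, $\sigma_b=\pi^{(2)}_b-1$; Case 2: same with $\pi^{(2)}_b-2$: type $s_1$, $\sigma_b=\pi^{(2)}_b-2$; Case 3: 1-marked $\pi^{(2)}_b+2$ exists and $\sigma_{b-1}\ne\pi^{(2)}_b+2$: type $s_2$, $\sigma_b=\pi^{(2)}_b+2$; Case 4: 1-marked $\pi^{(2)}_b$ exists: type $s_3$, $\sigma_b=\pi^{(2)}_b$. $\mathbb{C}_{<}(k,r|p,t)$: the set of $\pi\in\mathbb{C}(k,r)$ such that (1) no odd part is $\ge 2t+1$; (2) $\pi^{(2)}_{p+1}<2t+1<\pi^{(2)}_p$ (in particular $p\le N_2(\pi)$); (3) if $\pi^{(2)}_p=2t+2$ then it is of starting type $s_2$ or $s_3$; (4) if $\pi^{(2)}_{p+1}=2t$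 then it is of starting type $s_0$ or $s_1$. *)

theory Defs
  imports Main "HOL-Library.Extended_Real"
begin

text \<open>A partition is a list of positive naturals in non-increasing order;
  pi_i (1-indexed in the paper) is xs ! (i-1).\<close>
definition is_partition :: "nat list \<Rightarrow> bool" where
  "is_partition xs \<longleftrightarrow> sorted_wrt (\<ge>) xs \<and> 0 \<notin> set xs"

text \<open>Goellnitz-Gordon closeness: part x (larger) vs later part y.\<close>
definition gg_close :: "nat \<Rightarrow> nat \<Rightarrow> bool" where
  "gg_close x y \<longleftrightarrow> x - y \<le> 2 \<and> (odd x \<longrightarrow> x - y < 2)"

text \<open>GG marks, computed from the smallest part (end of the list) to the largest.
  gg_marks xs ! j is the mark of xs ! j.\<close>
fun gg_marks :: "nat list \<Rightarrow> nat list" where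
  "gg_marks [] = []"
| "gg_marks (x # rest) =
     (let ms = gg_marks rest in
      (LEAST m::nat. 0 < m \<and> m \<notin> {ms ! g | g. g < length rest \<and> gg_close x (rest ! g)}) # ms)"

definition mark :: "nat list \<Rightarrow> nat \<Rightarrow> nat" where
  "mark xs j = gg_marks xs ! j"

definition marked_parts :: "nat list \<Rightarrow> nat \<Rightarrow> nat list" where
  "marked_parts xs i = [xs ! j. j \<leftarrow> [0..<length xs], mark xs j = i]"

definition Nmark :: "nat list \<Rightarrow> nat \<Rightarrow> nat" where
  "Nmark xs i = length (marked_parts xs i)"

text \<open>pi^(i)_j with pi^(i)_0 = +infinity and pi^(i)_(N_i+1) = -infinity
  (and also -infinity beyond).\<close>
definition pim :: "nat list \<Rightarrow> nat \<Rightarrow> nat \<Rightarrow> ereal" where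
  "pim xs i j = (if j = 0 then \<infinity>
                 else if j \<le> Nmark xs i then ereal (real (marked_parts xs i ! (j - 1)))
                 else -\<infinity>)"

definition one_marked :: "nat list \<Rightarrow> nat \<Rightarrow> bool" where
  "one_marked xs a \<longleftrightarrow> (\<exists>j < length xs. xs ! j = a \<and> mark xs j = 1)"

definition in_C :: "nat \<Rightarrow> nat \<Rightarrow> nat list \<Rightarrow> bool" where
  "in_C k r xs \<longleftrightarrow> is_partition xs
     \<and> (\<forall>i < length xs. \<forall>j < length xs. i \<noteq> j \<and> xs ! i = xs ! j \<longrightarrow> even (xs ! i))
     \<and> (\<forall>i. i + k - 1 < length xs \<longrightarrow>
           xs ! i \<ge> xs ! (i + k - 1) + 2 \<and>
           (even (xs ! i) \<longrightarrow> xs ! i > xs ! (i + k - 1) + 2))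
     \<and> length (filter (\<lambda>x. x \<le> 2) xs) \<le> r - 1"

datatype stype = Sm1 | S0 | S1 | S2 | S3

definition lidx :: "nat list \<Rightarrow> nat" where
  "lidx xs = (GREATEST l. l \<le> Nmark xs 2 \<and>
                (\<forall>x \<in> set xs. odd x \<longrightarrow> ereal (real x) < pim xs 2 l))"

text \<open>st xs b = (type of pi^(2)_b, sigma_b) for 1 <= b <= l (None if no case applies).\<close>
fun st :: "nat list \<Rightarrow> nat \<Rightarrow> stype option \<times> nat" where
  "st xs 0 = (None, 0)"
| "st xs (Suc b) =
    (let a = marked_parts xs 2 ! b; prev = snd (st xs b) in
     if b = 0 then
       (if one_marked xs (a - 1) \<and> a + 2 \<notin> set xs then (Some S0, a - 1)
        else if one_marked xs (a - 2) \<and> a + 2 \<notin> set xs then (Some S1, a - 2)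
        else if one_marked xs (a + 2) then (Some S2, a + 2)
        else if one_marked xs a then (Some S3, a)
        else (None, 0))
     else
       (if one_marked xs (a - 1) \<and> (one_marked xs (a + 2) \<longrightarrow> prev = a + 2) then (Some S0, a - 1)
        else if one_marked xs (a - 2) \<and> (one_marked xs (a + 2) \<longrightarrow> prev = a + 2) then (Some S1, a - 2)
        else if one_marked xs (a + 2) \<and> prev \<noteq> a + 2 then (Some S2, a + 2)
        else if one_marked xs a then (Some S3, a)
        else (None, 0)))"

definition start_type :: "nat list \<Rightarrow> nat \<Rightarrow> stype option" where
  "start_type xs i = (if lidx xs < i then Some Sm1 else fst (st xs i))"

definition in_Cless :: "nat \<Rightarrow> nat \<Rightarrow> nat \<Rightarrow> nat \<Rightarrow> nat list \<Rightarrow> bool" where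
  "in_Cless k r p t xs \<longleftrightarrow> in_C k r xs
     \<and> (\<forall>x \<in> set xs. odd x \<longrightarrow> x < 2 * t + 1)
     \<and> pim xs 2 (p + 1) < ereal (real (2 * t + 1)) \<and> ereal (real (2 * t + 1)) < pim xs 2 p
     \<and> (pim xs 2 p = ereal (real (2 * t + 2)) \<longrightarrow> start_type xs p \<in> {Some S2, Some S3})
     \<and> (pim xs 2 (p + 1) = ereal (real (2 * t)) \<longrightarrow> start_type xs (p + 1) \<in> {Some S0, Some S1})"

end

theory Submission imports Defs begin

lemma len_gg[simp]: "length (gg_marks xs) = length xs"
  by (induction xs) (auto simp: Let_def)

lemma reidx: "{f g | g. (j::nat) < g \<and> g < Suc n \<and> Q g} = {f (Suc g) | g. j \<le> g \<and> g < n \<and> Q (Suc g)}"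
proof (intro set_eqI iffI)
  fix m assume "m \<in> {f g | g. (j::nat) < g \<and> g < Suc n \<and> Q g}"
  then obtain g where g: "m = f g" "j < g" "g < Suc n" "Q g" by blast
  then obtain g' where "g = Suc g'" by (cases g) auto
  then show "m \<in> {f (Suc g) | g. j \<le> g \<and> g < n \<and> Q (Suc g)}" using g by auto
next
  fix m assume "m \<in> {f (Suc g) | g. j \<le> g \<and> g < n \<and> Q (Suc g)}"
  then obtain g where g: "m = f (Suc g)" "j \<le> g" "g < n" "Q (Suc g)" by blast
  then show "m \<in> {f g | g. (j::nat) < g \<and> g < Suc n \<and> Q g}" by (auto intro!: exI[of _ "Suc g"])
qed

lemma mark_char: "j < length xs \<Longrightarrow> gg_marks xs ! j =
   (LEAST m::nat. 0 < m \<and> m \<notin> {gg_marks xs ! g | g. j < g \<and> g < length xs \<and> gg_close (xs!j) (xs!g)})"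
proof (induction xs arbitrary: j)
  case Nil then show ?case by simp
next
  case (Cons x rest)
  have R: "{gg_marks (x#rest) ! g | g. j < g \<and> g < length (x#rest) \<and> gg_close ((x#rest)!j) ((x#rest)!g)}
     = {gg_marks rest ! g | g. j \<le> g \<and> g < length rest \<and> gg_close ((x#rest)!j) (rest!g)}"
    using reidx[of "\<lambda>g. gg_marks (x#rest) ! g" j "length rest" "\<lambda>g. gg_close ((x#rest)!j) ((x#rest)!g)"]
    by (simp add: Let_def)
  show ?case
  proof (cases j)
    case 0
    have SE: "{gg_marks rest ! g | g. j \<le> g \<and> g < length rest \<and> gg_close ((x#rest)!j) (rest!g)}
      = {gg_marks rest ! g | g. g < length rest \<and> gg_close x (rest!g)}" using 0 by simp
    have e0: "gg_marks (x#rest) ! j = (LEAST m::nat. 0 < m \<and> m \<notin> {gg_marks rest ! g | g. g < length rest \<and> gg_close x (rest!g)})"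
      using 0 by (simp add: Let_def)
    show ?thesis unfolding R SE e0 by (rule refl)
  next
    case (Suc j')
    have SE: "{gg_marks rest ! g | g. j \<le> g \<and> g < length rest \<and> gg_close ((x#rest)!j) (rest!g)}
      = {gg_marks rest ! g | g. j' < g \<and> g < length rest \<and> gg_close (rest!j') (rest!g)}"
      using Suc by auto
    have e1: "gg_marks (x#rest) ! j = gg_marks rest ! j'" using Suc by (simp add: Let_def)
    have "j' < length rest" using Cons.prems Suc by simp
    note e2 = Cons.IH[OF this]
    show ?thesis unfolding R SE e1 e2 by (rule refl)
  qed
qed

lemma ex_fresh: assumes "finite (S::nat set)" shows "\<exists>m. 0 < m \<and> m \<notin> S"
proof -
  have "x \<le> Max (insert 0 S)" if "x \<in> S" for x using assms that by simp
  then show ?thesis by (metis Suc_n_not_le_n zero_less_Suc)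
qed

lemma mark_least: assumes "j < length xs"
  shows "mark xs j = (LEAST m::nat. 0 < m \<and> m \<notin> {gg_marks xs ! g | g. j < g \<and> g < length xs \<and> gg_close (xs!j) (xs!g)})"
  unfolding mark_def by (rule mark_char[OF assms])

lemma mark_prop: assumes "j < length xs"
  shows "0 < mark xs j \<and> mark xs j \<notin> {gg_marks xs ! g | g. j < g \<and> g < length xs \<and> gg_close (xs!j) (xs!g)}"
proof -
  let ?S = "{gg_marks xs ! g | g. j < g \<and> g < length xs \<and> gg_close (xs!j) (xs!g)}"
  have "?S \<subseteq> (\<lambda>g. gg_marks xs ! g) ` {..<length xs}" by blast
  then have "finite ?S" using finite_subset by blast
  then obtain m where m: "0 < m \<and> m \<notin> ?S" using ex_fresh by blast
  have "0 < (LEAST m. 0 < m \<and> m \<notin> ?S) \<and> (LEAST m. 0 < m \<and> m \<notin> ?S) \<notin> ?S"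
    by (rule LeastI[of "\<lambda>m. 0 < m \<and> m \<notin> ?S" m, OF m])
  then show ?thesis unfolding mark_least[OF assms] .
qed

lemma mark_below: assumes "j < length xs" "0 < m'" "m' < mark xs j"
  shows "\<exists>g. j < g \<and> g < length xs \<and> gg_close (xs!j) (xs!g) \<and> mark xs g = m'"
proof -
  let ?S = "{gg_marks xs ! g | g. j < g \<and> g < length xs \<and> gg_close (xs!j) (xs!g)}"
  have "m' < (LEAST m. 0 < m \<and> m \<notin> ?S)" using assms(3) unfolding mark_least[OF assms(1)] .
  then have "\<not> (0 < m' \<and> m' \<notin> ?S)"
    by (rule not_less_Least)
  then have "m' \<in> ?S" using assms(2) by blast
  then show ?thesis unfolding mark_def by blast
qed

lemma mark_diff: assumes "j < g" "g < length xs" "gg_close (xs!j) (xs!g)"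
  shows "mark xs j \<noteq> mark xs g"
proof -
  have "j < length xs" using assms by simp
  then have "mark xs j \<notin> {gg_marks xs ! g | g. j < g \<and> g < length xs \<and> gg_close (xs!j) (xs!g)}"
    using mark_prop by blast
  then show ?thesis using assms unfolding mark_def by blast
qed

lemma mp_mem: "j < length xs \<Longrightarrow> mark xs j = i \<Longrightarrow> xs ! j \<in> set (marked_parts xs i)"
  by (auto simp: marked_parts_def)

lemma concat_filter_map: "concat (map (\<lambda>j. if P j then [f j] else []) l) = map f (filter P l)"
  by (induction l) auto

lemma mp_sorted: "is_partition xs \<Longrightarrow> sorted_wrt (\<ge>) (marked_parts xs i)"
  unfolding marked_parts_def is_partition_def
proof -
  assume "sorted_wrt (\<ge>) xs \<and> 0 \<notin> set xs"
  then have s: "sorted_wrt (\<ge>) xs" by simp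
  have "sorted_wrt (\<lambda>a b. xs!a \<ge> xs!b) (filter (\<lambda>j. mark xs j = i) [0..<length xs])"
    apply (rule sorted_wrt_filter)
    apply (rule sorted_wrt_mono_rel[OF _ sorted_wrt_upt])
    subgoal for a b using sorted_wrt_nth_less[OF s, of a b] by simp
    done
  then show "sorted_wrt (\<ge>) [xs ! j. j \<leftarrow> [0..<length xs], mark xs j = i]"
    by (simp add: sorted_wrt_map concat_filter_map)
qed


lemma st_S01: assumes "fst (st xs (Suc b)) \<in> {Some S0, Some S1}"
  shows "(one_marked xs (marked_parts xs 2 ! b - 1) \<or> one_marked xs (marked_parts xs 2 ! b - 2))
     \<and> (b = 0 \<longrightarrow> marked_parts xs 2 ! b + 2 \<notin> set xs)
     \<and> (b \<noteq> 0 \<longrightarrow> one_marked xs (marked_parts xs 2 ! b + 2) \<longrightarrow> snd (st xs b) = marked_parts xs 2 ! b + 2)"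
  using assms by (auto simp: Let_def split: if_splits)

lemma st_snd: "snd (st xs (Suc b)) \<in> {marked_parts xs 2 ! b - 1, marked_parts xs 2 ! b - 2,
   marked_parts xs 2 ! b + 2, marked_parts xs 2 ! b, 0}"
  by (auto simp: Let_def)

declare st.simps[simp del]

theorem lemma2p4:
  fixes k r p t :: nat and xs :: "nat list"
  assumes "3 \<le> r" and "r \<le> k"
    and "in_Cless k r p t xs"
    and "pim xs 2 p \<ge> ereal (real (2 * t + 6))"
  shows "\<forall>j < length xs. (xs ! j = 2 * t + 2 \<or> xs ! j = 2 * t + 4) \<longrightarrow> mark xs j \<le> 1"
proof (intro allI impI)
  fix j assume j: "j < length xs" and x: "xs ! j = 2 * t + 2 \<or> xs ! j = 2 * t + 4"
  have part: "is_partition xs" using assms(3) by (simp add: in_Cless_def in_C_def)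
  have s: "sorted_wrt (\<ge>) xs" using part by (simp add: is_partition_def)
  have pos: "0 \<notin> set xs" using part by (simp add: is_partition_def)
  have odd: "\<forall>x \<in> set xs. odd x \<longrightarrow> x < 2 * t + 1" using assms(3) by (simp add: in_Cless_def)
  have lo: "pim xs 2 (p + 1) < ereal (real (2 * t + 1))" using assms(3) by (simp add: in_Cless_def)
  have hi: "ereal (real (2 * t + 1)) < pim xs 2 p" using assms(3) by (simp add: in_Cless_def)
  have c4: "pim xs 2 (p + 1) = ereal (real (2 * t)) \<longrightarrow> start_type xs (p + 1) \<in> {Some S0, Some S1}"
    using assms(3) by (simp add: in_Cless_def)
  define L where "L = marked_parts xs 2"
  have NL: "Nmark xs 2 = length L" by (simp add: L_def Nmark_def)
  have Ls: "sorted_wrt (\<ge>) L" using mp_sorted[OF part] by (simp add: L_def)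
  have Lge: "L ! b \<le> L ! a" if "a \<le> b" "b < length L" for a b
  proof (cases "a = b")
    case False
    then show ?thesis using sorted_wrt_nth_less[OF Ls, of a b] that by simp
  qed simp
  have pN: "p \<le> length L"
  proof (rule ccontr)
    assume "\<not> p \<le> length L" then show False using hi by (simp add: pim_def NL)
  qed
  have Lp: "0 < p \<Longrightarrow> L ! (p - 1) \<ge> 2 * t + 6"
    using assms(4) pN by (simp add: pim_def NL L_def[symmetric])
  have Lp1: "p < length L \<Longrightarrow> L ! p < 2 * t + 1"
    using lo by (simp add: pim_def NL L_def[symmetric])
  have no2: "y \<le> 2 * t \<or> y \<ge> 2 * t + 6" if "y \<in> set L" for y
  proof -
    obtain q where q: "q < length L" "y = L ! q" using \<open>y \<in> set L\<close> by (metis in_set_conv_nth)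
    show ?thesis
    proof (cases "q < p")
      case True
      then have "L ! (p - 1) \<le> L ! q" using Lge[of q "p - 1"] pN by auto
      then show ?thesis using Lp True q by auto
    next
      case False
      then have "p < length L" "L ! q \<le> L ! p" using Lge[of p q] q by auto
      then show ?thesis using Lp1 q by auto
    qed
  qed
  have is2t: "p < length L \<and> L ! p = 2 * t" if "y \<in> set L" "y = 2 * t" for y
  proof -
    obtain q where q: "q < length L" "y = L ! q" using \<open>y \<in> set L\<close> by (metis in_set_conv_nth)
    have "\<not> q < p"
    proof
      assume "q < p"
      then have "L ! (p - 1) \<le> L ! q" using Lge[of q "p - 1"] pN by auto
      then show False using Lp \<open>q < p\<close> q that by auto
    qed
    then have "p < length L" "L ! q \<le> L ! p" using Lge[of p q] q by auto
    then show ?thesis using Lp1 q that by auto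
  qed
  show "mark xs j \<le> 1"
  proof (rule ccontr)
    assume "\<not> mark xs j \<le> 1"
    then have m2: "mark xs j \<ge> 2" by simp
    show False
    proof (cases "mark xs j = 2")
      case True
      then have "xs ! j \<in> set L" using mp_mem[OF j] by (simp add: L_def)
      then show False using no2[OF \<open>xs ! j \<in> set L\<close>] x by linarith
    next
      case False
      then have m3: "mark xs j > 2" using m2 by simp
      obtain g where g: "j < g" "g < length xs" "gg_close (xs!j) (xs!g)" "mark xs g = 2"
        using mark_below[OF j, of 2] m3 by auto
      have le: "xs ! g \<le> xs ! j" using sorted_wrt_nth_less[OF s g(1) g(2)] by simp
      have inL: "xs ! g \<in> set L" using mp_mem[OF g(2)] g(4) by (simp add: L_def)
      have d2: "xs ! j - xs ! g \<le> 2" using g(3) by (simp add: gg_close_def)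
      have xg: "xs ! g = 2 * t" using no2[OF inL] x le d2 by linarith
      have xj: "xs ! j = 2 * t + 2" using no2[OF inL] x le d2 by linarith
      have tpos: "t > 0" using pos g(2) xg by (metis mult_0_right neq0_conv nth_mem)
      obtain pL: "p < length L" "L ! p = 2 * t" using is2t \<open>xs ! g \<in> set L\<close> xg by blast
      have "pim xs 2 (p + 1) = ereal (real (2 * t))" using pL by (simp add: pim_def NL L_def[symmetric])
      then have "start_type xs (p + 1) \<in> {Some S0, Some S1}" using c4 by simp
      then have st01: "fst (st xs (Suc p)) \<in> {Some S0, Some S1}"
        unfolding start_type_def by (cases "lidx xs < p + 1") (simp_all del: st.simps)
      note S = st_S01[OF st01, folded L_def, unfolded pL(2)]
      have in2: "2 * t + 2 \<in> set xs" using j xj by (metis nth_mem)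
      show False
      proof (cases p)
        case 0
        then show False using S in2 by simp
      next
        case (Suc p')
        have "snd (st xs p) \<noteq> 2 * t + 2"
          using st_snd[of xs p', folded L_def] Lp Suc by auto
        then have nom: "\<not> one_marked xs (2 * t + 2)" and om: "one_marked xs (2 * t - 1) \<or> one_marked xs (2 * t - 2)"
          using S Suc by auto
        obtain h where h: "j < h" "h < length xs" "gg_close (xs!j) (xs!h)" "mark xs h = 1"
          using mark_below[OF j, of 1] m3 by auto
        have leh: "xs ! h \<le> xs ! j" using sorted_wrt_nth_less[OF s h(1) h(2)] by simp
        have oddh: "odd (xs ! h) \<longrightarrow> xs ! h < 2 * t + 1" using odd h(2) by (metis nth_mem)
        have d2h: "xs ! j - xs ! h \<le> 2" using h(3) by (simp add: gg_close_def)
        have "xs ! h \<noteq> 2 * t + 1" using oddh by auto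
        then have "xs ! h = 2 * t \<or> xs ! h = 2 * t + 2"
          using leh d2h xj by linarith
        moreover have "xs ! h \<noteq> 2 * t + 2" using nom h by (auto simp: one_marked_def)
        ultimately have xh: "xs ! h = 2 * t" by simp
        obtain i where i: "i < length xs" "xs ! i = 2 * t - 1 \<or> xs ! i = 2 * t - 2" "mark xs i = 1"
          using om by (auto simp: one_marked_def)
        have "xs ! i < xs ! h" using i(2) xh tpos by auto
        have hi': "h < i"
        proof (rule ccontr)
          assume "\<not> h < i"
          then have "i < h \<or> i = h" by auto
          then have "xs ! h \<le> xs ! i" using sorted_wrt_nth_less[OF s _ h(2), of i] by auto
          then show False using \<open>xs ! i < xs ! h\<close> by simp
        qed
        have "gg_close (xs ! h) (xs ! i)" using xh i(2) tpos by (auto simp: gg_close_def)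
        then have "mark xs h \<noteq> mark xs i" using mark_diff[OF hi' i(1)] by simp
        then show False using h(4) i(3) by simp
      qed
    qed
  qed
qed

end
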